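(* Let $\alpha\ge0$ and $n>\alpha$. Let $B_r$ be the event that $\mathscr{G}(n,\alpha/n)$ has no connected component with more than $r$ vertices and let $L$ be the event that all connected components of $\mathscr{G}(n,\alpha/n)$ are trees. Then for all $r\ge1$, \[ P_{n,\alpha}(B_r)\le P_{n,\alpha}(L)\Bigl(1-\frac{\alpha}{n}\Bigr)^{-\frac12 rn}. \]
   Context: $\mathscr{G}(n,p)$ is the random graph on vertex set $\{1,\dots,n\}$ in which each of the $\binom n2$ unordered pairs is an edge independently with probability $p$; here $p=\alpha/n$, and $P_{n,\alpha}$ is the corresponding probability measure. *)

theory Defs
  imports Complex_Main
begin

definition all_edges :: "nat \<Rightarrow> nat set set" where
  "all_edges n = {e. \<exists>i j. 1 \<le> i \<and> i < j \<and> j \<le> n \<and> e = {i, j}}"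

text \<open>Probability of an event (predicate on edge sets) in G(n,p):
  each of the binom(n,2) pairs is an edge independently with probability p.\<close>
definition gnp_prob :: "nat \<Rightarrow> real \<Rightarrow> (nat set set \<Rightarrow> bool) \<Rightarrow> real" where
  "gnp_prob n p A =
     (\<Sum>E\<in>{E. E \<subseteq> all_edges n \<and> A E}.
        p ^ card E * (1 - p) ^ (card (all_edges n) - card E))"

definition adj :: "nat set set \<Rightarrow> nat \<Rightarrow> nat \<Rightarrow> bool" where
  "adj E u v \<longleftrightarrow> {u, v} \<in> E \<and> u \<noteq> v"

definition component :: "nat \<Rightarrow> nat set set \<Rightarrow> nat \<Rightarrow> nat set" where
  "component n E v = {u \<in> {1..n}. (adj E)\<^sup>*\<^sup>* v u}"

definition no_big_comp :: "nat \<Rightarrow> nat \<Rightarrow> nat set set \<Rightarrow> bool" where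
  "no_big_comp n r E \<longleftrightarrow> (\<forall>v\<in>{1..n}. card (component n E v) \<le> r)"

text \<open>L: every connected component is a tree, i.e. the (connected) induced subgraph
  on each component has exactly (#vertices - 1) edges.\<close>
definition all_trees :: "nat \<Rightarrow> nat set set \<Rightarrow> bool" where
  "all_trees n E \<longleftrightarrow>
     (\<forall>v\<in>{1..n}. card {e \<in> E. e \<subseteq> component n E v} = card (component n E v) - 1)"

end

theory Submission
  imports Defs
begin

lemma adj_sym: "adj F u v = adj F v u"
  unfolding adj_def by (auto simp: insert_commute)

lemma rtc_sym: "(adj F)\<^sup>*\<^sup>* u v \<Longrightarrow> (adj F)\<^sup>*\<^sup>* v u"
proof (induction rule: rtranclp_induct)
  case base then show ?case by simp
next
  case (step y z)
  then show ?case using adj_sym by (metis converse_rtranclp_into_rtranclp)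
qed

lemma rtc_mono: "F \<subseteq> G \<Longrightarrow> (adj F)\<^sup>*\<^sup>* u v \<Longrightarrow> (adj G)\<^sup>*\<^sup>* u v"
proof -
  assume "F \<subseteq> G"
  then have "adj F \<le> adj G" unfolding adj_def by auto
  then have "(adj F)\<^sup>*\<^sup>* \<le> (adj G)\<^sup>*\<^sup>*" by (rule rtranclp_mono)
  then show "(adj F)\<^sup>*\<^sup>* u v \<Longrightarrow> (adj G)\<^sup>*\<^sup>* u v" by auto
qed

lemma adj_insert: "adj (insert {u,v} F) x y \<Longrightarrow> adj F x y \<or> (x = u \<and> y = v) \<or> (x = v \<and> y = u)"
  unfolding adj_def by (auto simp: doubleton_eq_iff)

lemma rtc_insert:
  assumes "(adj (insert {u,v} F))\<^sup>*\<^sup>* a b"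
  shows "(adj F)\<^sup>*\<^sup>* a b \<or> ((adj F)\<^sup>*\<^sup>* a u \<and> (adj F)\<^sup>*\<^sup>* v b) \<or> ((adj F)\<^sup>*\<^sup>* a v \<and> (adj F)\<^sup>*\<^sup>* u b)"
  using assms
proof (induction rule: rtranclp_induct)
  case base then show ?case by simp
next
  case (step y z)
  from adj_insert[OF step(2)] show ?case
  proof (elim disjE)
    assume "adj F y z"
    with step(3) show ?thesis by (meson rtranclp.rtrancl_into_rtrancl)
  next
    assume "y = u \<and> z = v"
    with step(3) show ?thesis by auto
  next
    assume "y = v \<and> z = u"
    with step(3) show ?thesis by auto
  qed
qed

definition conn :: "nat set set \<Rightarrow> nat set \<Rightarrow> bool" where
  "conn F e \<longleftrightarrow> (\<forall>a\<in>e. \<forall>b\<in>e. (adj F)\<^sup>*\<^sup>* a b)"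

lemma conn_mono: "conn F e \<Longrightarrow> F \<subseteq> G \<Longrightarrow> conn G e"
  unfolding conn_def using rtc_mono by blast

lemma all_edges_elem: "e \<in> all_edges n \<Longrightarrow> \<exists>i j. 1 \<le> i \<and> i < j \<and> j \<le> n \<and> e = {i, j}"
  unfolding all_edges_def by auto

lemma finite_all_edges: "finite (all_edges n)"
proof -
  have "all_edges n \<subseteq> (\<lambda>(i,j). {i,j}) ` ({1..n} \<times> {1..n})"
    unfolding all_edges_def by force
  then show ?thesis by (rule finite_subset) auto
qed

lemma comp_self: "w \<in> {1..n} \<Longrightarrow> w \<in> component n F w"
  unfolding component_def by auto

lemma all_trees_empty: "all_trees n {}"
proof -
  have "component n {} w = {w}" if "w \<in> {1..n}" for w
  proof -
    have "(adj {})\<^sup>*\<^sup>* w x \<longleftrightarrow> x = w" for x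
    proof
      assume "(adj {})\<^sup>*\<^sup>* w x" then show "x = w"
        by (induction rule: rtranclp_induct) (auto simp: adj_def)
    qed auto
    then show ?thesis using that unfolding component_def by auto
  qed
  then show ?thesis unfolding all_trees_def by auto
qed


lemma comp_eq: "a \<in> component n F w \<Longrightarrow> component n F a = component n F w"
  unfolding component_def using rtc_sym rtranclp_trans by (smt (verit, ccfv_threshold) Collect_cong mem_Collect_eq)

lemma edge_in_comp:
  assumes "F \<subseteq> all_edges n" "f \<in> F" "a \<in> f" "b \<in> f"
  shows "(adj F)\<^sup>*\<^sup>* a b"
proof -
  obtain i j where ij: "1 \<le> i" "i < j" "j \<le> n" "f = {i,j}" using all_edges_elem assms by blast
  then have "adj F i j" "adj F j i" using assms unfolding adj_def by (auto simp: insert_commute)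
  then show ?thesis using assms ij by auto
qed

lemma edge_sub_comp:
  assumes "F \<subseteq> all_edges n" "f \<in> F" "f \<inter> component n F w \<noteq> {}"
  shows "f \<subseteq> component n F w"
proof
  fix b assume b: "b \<in> f"
  obtain a where a: "a \<in> f" "a \<in> component n F w" using assms by auto
  have "f \<subseteq> {1..n}" using assms all_edges_elem by fastforce
  then show "b \<in> component n F w" using a b edge_in_comp[OF assms(1,2) a(1) b]
    unfolding component_def by (auto intro: rtranclp_trans)
qed

lemma all_trees_insert:
  assumes FA: "F \<subseteq> all_edges n" and uv: "u \<in> {1..n}" "v \<in> {1..n}" "u \<noteq> v"
    and nc: "\<not> (adj F)\<^sup>*\<^sup>* u v" and T: "all_trees n F"
  shows "all_trees n (insert {u,v} F)"
  unfolding all_trees_def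
proof
  fix w assume w: "w \<in> {1..n}"
  define F' where "F' = insert {u,v} F"
  define Cu where "Cu = component n F u"
  define Cv where "Cv = component n F v"
  have fin: "finite Cu" "finite Cv" unfolding Cu_def Cv_def component_def by auto
  have uCu: "u \<in> Cu" and vCv: "v \<in> Cv" using uv comp_self Cu_def Cv_def by auto
  have vnCu: "v \<notin> Cu" using nc Cu_def component_def by auto
  have unCv: "u \<notin> Cv" using nc rtc_sym[of F v u] Cv_def component_def by auto
  have disj: "Cu \<inter> Cv = {}"
    using comp_eq vnCu vCv unfolding Cu_def Cv_def by blast
  have FF': "F \<subseteq> F'" unfolding F'_def by auto
  have uv': "(adj F')\<^sup>*\<^sup>* u v" "(adj F')\<^sup>*\<^sup>* v u" unfolding F'_def adj_def
    using uv by (auto simp: insert_commute)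
  have nF: "{u,v} \<notin> F" using nc uv unfolding adj_def by auto
  have cardT: "card {e \<in> F. e \<subseteq> Cu} = card Cu - 1" "card {e \<in> F. e \<subseteq> Cv} = card Cv - 1"
    using T uv unfolding all_trees_def Cu_def Cv_def by auto
  show "card {e \<in> F'. e \<subseteq> component n F' w} = card (component n F' w) - 1"
  proof (cases "w \<in> Cu \<union> Cv")
    case True
    have C': "component n F' w = Cu \<union> Cv"
    proof
      show "component n F' w \<subseteq> Cu \<union> Cv"
      proof
        fix x assume "x \<in> component n F' w"
        then have x: "x \<in> {1..n}" "(adj F')\<^sup>*\<^sup>* w x" unfolding component_def by auto
        from rtc_insert[OF x(2)[unfolded F'_def]]
        have D1: "(adj F)\<^sup>*\<^sup>* w x \<or> (adj F)\<^sup>*\<^sup>* v x \<or> (adj F)\<^sup>*\<^sup>* u x" by blast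
        have D2: "(adj F)\<^sup>*\<^sup>* u w \<or> (adj F)\<^sup>*\<^sup>* v w" using True unfolding Cu_def Cv_def component_def by blast
        have "(adj F)\<^sup>*\<^sup>* u x \<or> (adj F)\<^sup>*\<^sup>* v x" using D1 D2 by (meson rtranclp_trans)
        then show "x \<in> Cu \<union> Cv" using x(1) unfolding Cu_def Cv_def component_def by blast
      qed
    next
      have wu: "(adj F')\<^sup>*\<^sup>* w u"
      proof -
        have "(adj F)\<^sup>*\<^sup>* w u \<or> (adj F)\<^sup>*\<^sup>* w v" using True rtc_sym[of F u w] rtc_sym[of F v w] unfolding Cu_def Cv_def component_def by blast
        then show ?thesis using rtc_mono[OF FF'] uv' by (meson rtranclp_trans)
      qed
      show "Cu \<union> Cv \<subseteq> component n F' w"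
      proof
        fix x assume "x \<in> Cu \<union> Cv"
        then have "x \<in> {1..n}" "(adj F)\<^sup>*\<^sup>* u x \<or> (adj F)\<^sup>*\<^sup>* v x" unfolding Cu_def Cv_def component_def by auto
        then have x: "x \<in> {1..n}" "(adj F')\<^sup>*\<^sup>* u x \<or> (adj F')\<^sup>*\<^sup>* v x"
          using rtc_mono[OF FF'] by blast+
        then have "(adj F')\<^sup>*\<^sup>* w x" using wu uv'(1) by (meson rtranclp_trans)
        then show "x \<in> component n F' w" using x(1) unfolding component_def by blast
      qed
    qed
    have E': "{e \<in> F'. e \<subseteq> Cu \<union> Cv} = insert {u,v} ({e \<in> F. e \<subseteq> Cu} \<union> {e \<in> F. e \<subseteq> Cv})"
    proof -
      have "e \<subseteq> Cu \<or> e \<subseteq> Cv" if h: "e \<in> F" "e \<subseteq> Cu \<union> Cv" for e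
      proof -
        obtain i j where "e = {i,j}" using all_edges_elem FA h by blast
        then have "e \<inter> Cu \<noteq> {} \<or> e \<inter> Cv \<noteq> {}" using h by auto
        then show ?thesis using edge_sub_comp[OF FA h(1)] Cu_def Cv_def by auto
      qed
      then show ?thesis unfolding F'_def using uCu vCv by auto
    qed
    have ne: "{u,v} \<notin> {e \<in> F. e \<subseteq> Cu} \<union> {e \<in> F. e \<subseteq> Cv}" using vnCu unCv by auto
    have dj: "{e \<in> F. e \<subseteq> Cu} \<inter> {e \<in> F. e \<subseteq> Cv} = {}"
    proof -
      have "e \<noteq> {}" if "e \<in> F" for e using all_edges_elem FA that by blast
      then show ?thesis using disj by blast
    qed
    have finF: "finite F" by (rule finite_subset[OF FA finite_all_edges])
    have "card {e \<in> F'. e \<subseteq> component n F' w} = Suc (card ({e \<in> F. e \<subseteq> Cu} \<union> {e \<in> F. e \<subseteq> Cv}))"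
      unfolding C' E' using finF ne by (simp add: card_insert_if)
    also have "\<dots> = Suc (card {e \<in> F. e \<subseteq> Cu} + card {e \<in> F. e \<subseteq> Cv})"
      using finF dj by (simp add: card_Un_disjoint)
    also have "\<dots> = Suc ((card Cu - 1) + (card Cv - 1))" using cardT by simp
    also have "\<dots> = card (Cu \<union> Cv) - 1"
    proof -
      have "card Cu > 0" "card Cv > 0" using fin uCu vCv by (auto simp: card_gt_0_iff)
      moreover have "card (Cu \<union> Cv) = card Cu + card Cv" by (rule card_Un_disjoint[OF fin disj])
      ultimately show ?thesis by linarith
    qed
    finally show ?thesis unfolding C' .
  next
    case False
    have C': "component n F' w = component n F w"
    proof
      show "component n F' w \<subseteq> component n F w"
      proof
        fix x assume "x \<in> component n F' w"
        then have x: "x \<in> {1..n}" "(adj F')\<^sup>*\<^sup>* w x" unfolding component_def by auto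
        have "\<not> (adj F)\<^sup>*\<^sup>* w u" "\<not> (adj F)\<^sup>*\<^sup>* w v" using False rtc_sym[of F w u] rtc_sym[of F w v] w unfolding Cu_def Cv_def component_def by blast+
        with rtc_insert[OF x(2)[unfolded F'_def]]
        have "(adj F)\<^sup>*\<^sup>* w x" by auto
        then show "x \<in> component n F w" using x(1) component_def by auto
      qed
    next
      show "component n F w \<subseteq> component n F' w"
        unfolding component_def using rtc_mono[OF FF'] by auto
    qed
    have "u \<notin> component n F w"
    proof
      assume "u \<in> component n F w"
      then have "component n F u = component n F w" by (rule comp_eq)
      then have "w \<in> Cu" using comp_self[OF w] Cu_def by simp
      then show False using False by simp
    qed
    then have "{u,v} \<notin> Pow (component n F w)" by simp
    then have "{e \<in> F'. e \<subseteq> component n F w} = {e \<in> F. e \<subseteq> component n F w}"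
      unfolding F'_def by auto
    then have "{e \<in> F'. e \<subseteq> component n F' w} = {e \<in> F. e \<subseteq> component n F w}"
      unfolding C' .
    moreover have "card {e \<in> F. e \<subseteq> component n F w} = card (component n F w) - 1"
      using T w unfolding all_trees_def by blast
    ultimately show ?thesis using C' by simp
  qed
qed


fun kr :: "nat set list \<Rightarrow> nat set set \<Rightarrow> nat set set" where
  "kr [] F = F"
| "kr (e # es) F = kr es (if conn F e then F else insert e F)"

lemma not_conn:
  assumes "e = {i,j}" "\<not> conn F e"
  shows "\<not> (adj F)\<^sup>*\<^sup>* i j"
proof
  assume h: "(adj F)\<^sup>*\<^sup>* i j"
  have "(adj F)\<^sup>*\<^sup>* j i" by (rule rtc_sym[OF h])
  then have "conn F e" using h assms(1) unfolding conn_def by auto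
  then show False using assms(2) by blast
qed

lemma kr_inv:
  "set es \<subseteq> all_edges n \<Longrightarrow> F \<subseteq> all_edges n \<Longrightarrow> all_trees n F \<Longrightarrow>
   kr es F \<subseteq> all_edges n \<and> all_trees n (kr es F) \<and> F \<subseteq> kr es F \<and> kr es F \<subseteq> F \<union> set es
   \<and> (\<forall>e\<in>set es. conn (kr es F) e)"
proof (induction es arbitrary: F)
  case Nil
  then show ?case by simp
next
  case (Cons e es)
  define F1 where "F1 = (if conn F e then F else insert e F)"
  have eA: "e \<in> all_edges n" using Cons.prems by auto
  then obtain i j where ij: "1 \<le> i" "i < j" "j \<le> n" "e = {i,j}" using all_edges_elem by blast
  have F1A: "F1 \<subseteq> all_edges n" using Cons.prems eA unfolding F1_def by auto
  have T1: "all_trees n F1"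
  proof (cases "conn F e")
    case True then show ?thesis using Cons.prems unfolding F1_def by simp
  next
    case False
    have "\<not> (adj F)\<^sup>*\<^sup>* i j" by (rule not_conn[OF ij(4) False])
    then have "all_trees n (insert {i,j} F)"
      using all_trees_insert[of F n i j] Cons.prems ij by auto
    then show ?thesis using False ij unfolding F1_def by simp
  qed
  have c1: "conn F1 e"
  proof (cases "conn F e")
    case True then show ?thesis unfolding F1_def by simp
  next
    case False
    then have "e \<in> F1" unfolding F1_def by simp
    then show ?thesis using edge_in_comp[OF F1A] unfolding conn_def by blast
  qed
  have IH: "kr es F1 \<subseteq> all_edges n \<and> all_trees n (kr es F1) \<and> F1 \<subseteq> kr es F1 \<and> kr es F1 \<subseteq> F1 \<union> set es
   \<and> (\<forall>e\<in>set es. conn (kr es F1) e)"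
    using Cons.IH[OF _ F1A T1] Cons.prems by auto
  have "conn (kr es F1) e" using conn_mono[OF c1] IH by blast
  moreover have "F \<subseteq> F1" "F1 \<subseteq> insert e F" unfolding F1_def by auto
  ultimately show ?case using IH by (auto simp: F1_def[symmetric])
qed

definition phi :: "nat set set \<Rightarrow> nat set set" where
  "phi E = kr (SOME xs. set xs = E) {}"

lemma phi_props:
  assumes "E \<subseteq> all_edges n"
  shows "phi E \<subseteq> E \<and> all_trees n (phi E) \<and> phi E \<subseteq> all_edges n \<and> (\<forall>e\<in>E. conn (phi E) e)"
proof -
  have "finite E" using assms finite_all_edges finite_subset by blast
  then have "\<exists>xs. set xs = E" by (rule finite_list)
  then have xs: "set (SOME xs. set xs = E) = E" by (rule someI_ex)
  show ?thesis using kr_inv[of "SOME xs. set xs = E" n "{}"] xs assms all_trees_empty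
    unfolding phi_def by auto
qed

lemma card_edge: "e \<in> all_edges n \<Longrightarrow> card e = 2 \<and> e \<subseteq> {1..n}"
  using all_edges_elem[of e n] by auto

lemma count_W:
  assumes FA: "F \<subseteq> all_edges n" and cr: "\<forall>v\<in>{1..n}. card (component n F v) \<le> r"
  shows "2 * card {e \<in> all_edges n. conn F e} \<le> n * r"
proof -
  define W where "W = {e \<in> all_edges n. conn F e}"
  have finW: "finite W" unfolding W_def using finite_all_edges by auto
  have "2 * card W = (\<Sum>e\<in>W. card {a \<in> {1..n}. a \<in> e})"
  proof -
    have "card {a \<in> {1..n}. a \<in> e} = 2" if "e \<in> W" for e
    proof -
      have "e \<in> all_edges n" using that W_def by auto
      then have "card e = 2" "e \<subseteq> {1..n}" using card_edge by blast+
      moreover have "{a \<in> {1..n}. a \<in> e} = e" using calculation by auto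
      ultimately show ?thesis by simp
    qed
    then show ?thesis by simp
  qed
  also have "\<dots> = (\<Sum>e\<in>W. \<Sum>a\<in>{a \<in> {1..n}. a \<in> e}. (1::nat))" by simp
  also have "\<dots> = (\<Sum>a\<in>{1..n}. \<Sum>e\<in>{e \<in> W. a \<in> e}. (1::nat))"
    by (rule sum.swap_restrict[OF finW]) simp
  also have "\<dots> = (\<Sum>a\<in>{1..n}. card {e \<in> W. a \<in> e})" by simp
  also have "\<dots> \<le> (\<Sum>a\<in>{1..n}. r)"
  proof (rule sum_mono)
    fix a assume a: "a \<in> {1..n}"
    have sub: "{e \<in> W. a \<in> e} \<subseteq> (\<lambda>b. {a,b}) ` component n F a"
    proof
      fix e assume e: "e \<in> {e \<in> W. a \<in> e}"
      then have eA: "e \<in> all_edges n" and ce: "conn F e" and ae: "a \<in> e" unfolding W_def by auto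
      obtain i j where ij: "1 \<le> i" "i < j" "j \<le> n" "e = {i,j}" using all_edges_elem[OF eA] by blast
      define b where "b = (if a = i then j else i)"
      have eab: "e = {a,b}" using ae ij unfolding b_def by auto
      have "b \<in> e" using eab by simp
      then have "(adj F)\<^sup>*\<^sup>* a b" using ce ae unfolding conn_def by blast
      moreover have "b \<in> {1..n}" using ij b_def by auto
      ultimately have "b \<in> component n F a" unfolding component_def by simp
      then show "e \<in> (\<lambda>b. {a,b}) ` component n F a" using eab by blast
    qed
    have fc: "finite (component n F a)" unfolding component_def by simp
    have "card {e \<in> W. a \<in> e} \<le> card ((\<lambda>b. {a,b}) ` component n F a)"
      by (rule card_mono[OF finite_imageI[OF fc] sub])
    also have "\<dots> \<le> card (component n F a)" by (rule card_image_le[OF fc])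
    also have "\<dots> \<le> r" using cr a by blast
    finally show "card {e \<in> W. a \<in> e} \<le> r" .
  qed
  also have "\<dots> = n * r" by simp
  finally show ?thesis unfolding W_def .
qed

lemma sum_pow:
  fixes p :: real
  assumes "finite X"
  shows "(\<Sum>Y\<in>Pow X. p ^ card Y * (1 - p) ^ (card X - card Y)) = 1"
proof -
  have "(1::real) = (\<Prod>x\<in>X. p + (1 - p))" by simp
  also have "\<dots> = (\<Sum>Y\<in>Pow X. (\<Prod>x\<in>Y. p) * (\<Prod>x\<in>X - Y. 1 - p))"
    by (rule prod_add[OF assms])
  also have "\<dots> = (\<Sum>Y\<in>Pow X. p ^ card Y * (1 - p) ^ (card X - card Y))"
  proof (rule sum.cong)
    fix Y assume "Y \<in> Pow X"
    then have "Y \<subseteq> X" by simp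
    then have "card (X - Y) = card X - card Y" using assms finite_subset card_Diff_subset by metis
    then show "(\<Prod>x\<in>Y. p) * (\<Prod>x\<in>X - Y. 1 - p) = p ^ card Y * (1 - p) ^ (card X - card Y)"
      by simp
  qed simp
  finally show ?thesis by simp
qed


lemma comp_mono_card:
  assumes "F \<subseteq> E" shows "card (component n F v) \<le> card (component n E v)"
proof (rule card_mono)
  show "finite (component n E v)" unfolding component_def by simp
  show "component n F v \<subseteq> component n E v" unfolding component_def using rtc_mono[OF assms] by auto
qed

theorem lemma5p1:
  fixes \<alpha> :: real and n r :: nat
  assumes "\<alpha> \<ge> 0" and "real n > \<alpha>" and "r \<ge> 1"
  shows "gnp_prob n (\<alpha> / n) (no_big_comp n r)
           \<le> gnp_prob n (\<alpha> / n) (all_trees n) * (1 - \<alpha> / n) powr (- (1/2) * real r * real n)"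
proof -
  define p where "p = \<alpha> / real n"
  define q where "q = 1 - p"
  define AE where "AE = all_edges n"
  define N where "N = card AE"
  define w where "w = (\<lambda>E::nat set set. p ^ card E * q ^ (N - card E))"
  define S where "S = {E. E \<subseteq> AE \<and> no_big_comp n r E}"
  define T where "T = {E. E \<subseteq> AE \<and> all_trees n E}"
  define c where "c = q powr (- (1/2) * real r * real n)"
  define X where "X = (\<lambda>F. {e \<in> AE. conn F e} - F)"
  have npos: "real n > 0" using assms by linarith
  have p0: "p \<ge> 0" unfolding p_def using assms by simp
  have p1: "p < 1" unfolding p_def using assms npos by simp
  have q0: "q > 0" "q \<le> 1" unfolding q_def using p0 p1 by auto
  have wnn: "w E \<ge> 0" for E unfolding w_def using p0 q0 by simp
  have c0: "c \<ge> 0" unfolding c_def by simp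
  have finAE: "finite AE" unfolding AE_def by (rule finite_all_edges)
  have finS: "finite S" unfolding S_def using finAE by (simp add: finite_subset[of _ "Pow AE"] subset_iff)
  have finT: "finite T" unfolding T_def using finAE by (simp add: finite_subset[of _ "Pow AE"] subset_iff)
  have phiST: "phi ` S \<subseteq> T"
    using phi_props unfolding S_def T_def AE_def by blast
  have LHS: "gnp_prob n (\<alpha> / n) (no_big_comp n r) = sum w S"
    unfolding gnp_prob_def w_def S_def p_def q_def N_def AE_def ..
  have RHS: "gnp_prob n (\<alpha> / n) (all_trees n) = sum w T"
    unfolding gnp_prob_def w_def T_def p_def q_def N_def AE_def ..
  have stepB: "sum w {E \<in> S. phi E = F} \<le> w F * c" if F: "F \<in> phi ` S" for F
  proof -
    obtain E0 where E0: "E0 \<in> S" "phi E0 = F" using F by blast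
    have E0A: "E0 \<subseteq> AE" using E0 S_def by auto
    have FP: "F \<subseteq> E0" "all_trees n F" "F \<subseteq> AE" "\<forall>e\<in>E0. conn F e"
      using phi_props[of E0 n] E0A E0(2) unfolding AE_def by auto
    have cr: "\<forall>v\<in>{1..n}. card (component n F v) \<le> r"
    proof
      fix v assume v: "v \<in> {1..n}"
      have "no_big_comp n r E0" using E0(1) S_def by simp
      then have "card (component n E0 v) \<le> r" using v unfolding no_big_comp_def by blast
      then show "card (component n F v) \<le> r" using comp_mono_card[OF FP(1), of n v] by linarith
    qed
    have cW: "2 * card {e \<in> AE. conn F e} \<le> n * r"
      using count_W[OF FP(3)[unfolded AE_def] cr] unfolding AE_def .
    have finX: "finite (X F)" unfolding X_def using finAE by simp
    have cX: "2 * card (X F) \<le> n * r"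
    proof -
      have "card (X F) \<le> card {e \<in> AE. conn F e}" unfolding X_def
        by (rule card_mono) (use finAE in auto)
      then show ?thesis using cW by linarith
    qed
    have finF: "finite F" using FP(3) finAE finite_subset by blast
    have dFX: "F \<inter> X F = {}" unfolding X_def by auto
    have FXN: "card F + card (X F) \<le> N"
    proof -
      have "card F + card (X F) = card (F \<union> X F)" using card_Un_disjoint[OF finF finX dFX] by simp
      also have "\<dots> \<le> N" unfolding N_def by (rule card_mono[OF finAE]) (use FP(3) X_def in auto)
      finally show ?thesis .
    qed
    have sub: "{E \<in> S. phi E = F} \<subseteq> (\<lambda>Y. F \<union> Y) ` Pow (X F)"
    proof
      fix E assume "E \<in> {E \<in> S. phi E = F}"
      then have E: "E \<subseteq> AE" "phi E = F" unfolding S_def by auto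
      then have "F \<subseteq> E" "\<forall>e\<in>E. conn F e" using phi_props[of E n] unfolding AE_def by auto
      then have "E = F \<union> (E - F)" "E - F \<in> Pow (X F)" using E unfolding X_def by auto
      then show "E \<in> (\<lambda>Y. F \<union> Y) ` Pow (X F)" by blast
    qed
    have inj: "inj_on (\<lambda>Y. F \<union> Y) (Pow (X F))"
    proof (rule inj_onI)
      fix Y1 Y2 assume "Y1 \<in> Pow (X F)" "Y2 \<in> Pow (X F)" "F \<union> Y1 = F \<union> Y2"
      then show "Y1 = Y2" using dFX by blast
    qed
    have "sum w {E \<in> S. phi E = F} \<le> sum w ((\<lambda>Y. F \<union> Y) ` Pow (X F))"
      by (rule sum_mono2[OF finite_imageI sub]) (use finX wnn in auto)
    also have "\<dots> = (\<Sum>Y\<in>Pow (X F). w (F \<union> Y))"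
      by (simp add: sum.reindex[OF inj])
    also have "\<dots> = w F / q ^ card (X F)"
    proof -
      have "w (F \<union> Y) * q ^ card (X F) = w F * (p ^ card Y * q ^ (card (X F) - card Y))"
        if Y: "Y \<in> Pow (X F)" for Y
      proof -
        have YX: "Y \<subseteq> X F" using Y by simp
        have finY: "finite Y" by (rule finite_subset[OF YX finX])
        have cY: "card Y \<le> card (X F)" by (rule card_mono[OF finX YX])
        have "F \<inter> Y = {}" using YX dFX by blast
        then have cFY: "card (F \<union> Y) = card F + card Y"
          by (rule card_Un_disjoint[OF finF finY])
        have e1: "N - card (F \<union> Y) + card (X F) = (N - card F) + (card (X F) - card Y)"
          using cFY cY FXN by linarith
        have "w (F \<union> Y) * q ^ card (X F) = p ^ (card F + card Y) * q ^ (N - card (F \<union> Y) + card (X F))"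
          unfolding w_def cFY by (simp add: power_add)
        also have "\<dots> = w F * (p ^ card Y * q ^ (card (X F) - card Y))"
          unfolding e1 w_def by (simp add: power_add)
        finally show ?thesis .
      qed
      then have "(\<Sum>Y\<in>Pow (X F). w (F \<union> Y)) * q ^ card (X F)
          = (\<Sum>Y\<in>Pow (X F). w F * (p ^ card Y * q ^ (card (X F) - card Y)))"
        by (simp add: sum_distrib_right)
      also have "\<dots> = w F * (\<Sum>Y\<in>Pow (X F). p ^ card Y * (1 - p) ^ (card (X F) - card Y))"
        by (simp add: sum_distrib_left q_def)
      also have "\<dots> = w F" using sum_pow[OF finX] by simp
      finally have eq: "(\<Sum>Y\<in>Pow (X F). w (F \<union> Y)) * q ^ card (X F) = w F" .
      have "q ^ card (X F) > 0" using q0 by simp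
      then have "q ^ card (X F) \<noteq> 0" by linarith
      then show ?thesis using eq by (rule nonzero_eq_divide_eq[THEN iffD2])
    qed
    also have "\<dots> \<le> w F * c"
    proof -
      have "1 / q ^ card (X F) = q powr (- real (card (X F)))"
        using q0 by (simp add: powr_minus powr_realpow divide_inverse)
      also have "\<dots> \<le> c" unfolding c_def
      proof (rule powr_mono')
        have "real (2 * card (X F)) \<le> real (n * r)" using cX by (simp only: of_nat_le_iff)
        then have "2 * real (card (X F)) \<le> real r * real n" by (simp add: mult.commute)
        then show "- (1/2) * real r * real n \<le> - real (card (X F))" by linarith
      qed (use q0 in auto)
      finally have "1 / q ^ card (X F) \<le> c" .
      then have "w F * (1 / q ^ card (X F)) \<le> w F * c" by (rule mult_left_mono[OF _ wnn[of F]])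
      then show ?thesis by simp
    qed
    finally show ?thesis .
  qed
  have "sum w S = (\<Sum>F\<in>phi ` S. sum w {E \<in> S. phi E = F})"
    by (rule sum.image_gen[OF finS])
  also have "\<dots> \<le> (\<Sum>F\<in>phi ` S. w F * c)"
    by (rule sum_mono) (rule stepB)
  also have "\<dots> \<le> (\<Sum>F\<in>T. w F * c)"
    by (rule sum_mono2[OF finT phiST]) (use wnn c0 in auto)
  also have "\<dots> = sum w T * c" by (simp add: sum_distrib_right)
  finally show ?thesis unfolding LHS RHS c_def q_def p_def .
qed

end
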